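(* Let $R$, $G$, $*$, $\sigma$ and $\mathcal{S}$ be as in the context, and suppose $\mathcal{S}$ is anticommutative. Let $x,y\in G\setminus G_*$ with $\sigma(y)\neq -1$. Then one of the following holds: - (i) $xy=yx=x^*y^*=y^*x^*$ and $2(1+\sigma(xy))=0=2(\sigma(x)+\sigma(y))$; - (ii) $xy=yx^*=y^*x=x^*y^*$ and $1+\sigma(x)+\sigma(y)+\sigma(xy)=0$; - (iii) $xy=x^*y^*\neq yx^*=y^*x$, $\sigma(xy)=-1$ and $\sigma(x)=-\sigma(y)$; - (iv) $xy=yx^*\neq x^*y^*=y^*x$ and $\sigma(x)=-1$.
   Context: Throughout, $R$ is a commutative ring with unity with $\operatorname{char}(R)\neq 2$, and $\mathcal{U}(R)$ is its unit group. $G$ is a group with an involution $*$, i.e. a map $x\mapsto x^*$ with $(xy)^*=y^*x^*$ and $(x^* )^*=x$. The map $\sigma:G\to\mathcal{U}(R)$ is a nontrivial group homomorphism with kernel $N=\ker\sigma$, and it is compatible with $*$: $xx^*\in N$ for all $x\in G$. The group ring $RG$ carries the involution $\left(\sum_{x\in G}\alpha_x x\right)^{\sigma*}=\sum_{x\in G}\sigma(x)\alpha_x x^*$. Write $G_*=\{x\in G: x^*=x\}$ and $N_*=G_*\cap N$. Let $\mathcal{S}$ be the $R$-submodule of $RG$ spanned by the union of the following three sets: - $2\mathcal{S}_1=\{2x: x\in N_*\}$; - $\mathcal{S}_2=\{\alpha x: x\in G_*\setminus N,\ \alpha\in R,\ \alpha(1-\sigma(x))=0\}$; - $\mathcal{S}_3=\{x+\sigma(x)x^*: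 x\in G\setminus G_*\}$. $\mathcal{S}$ is called anticommutative if $ab+ba=0$ for all $a,b\in\mathcal{S}$. *)

theory Defs
  imports "HOL-Algebra.Group"
begin

text \<open>Group ring RG: elements are functions 'g => 'r with finite support
contained in carrier G. Basis element of x, sum, scalar multiplication,
and convolution product.\<close>

definition gr_supp :: "('g \<Rightarrow> 'r::zero) \<Rightarrow> 'g set" where
  "gr_supp a = {g. a g \<noteq> 0}"

definition gr_basis :: "'g \<Rightarrow> 'g \<Rightarrow> 'r::{zero,one}" where
  "gr_basis x = (\<lambda>g. if g = x then 1 else 0)"

definition gr_mult :: "('g, 'b) monoid_scheme \<Rightarrow> ('g \<Rightarrow> 'r::comm_ring_1) \<Rightarrow> ('g \<Rightarrow> 'r) \<Rightarrow> ('g \<Rightarrow> 'r)" where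
  "gr_mult G a b = (\<lambda>g. \<Sum>p \<in> {(h, k). h \<in> gr_supp a \<and> k \<in> gr_supp b \<and> h \<otimes>\<^bsub>G\<^esub> k = g}.
      a (fst p) * b (snd p))"

definition group_involution :: "('g, 'b) monoid_scheme \<Rightarrow> ('g \<Rightarrow> 'g) \<Rightarrow> bool" where
  "group_involution G star \<longleftrightarrow>
     (\<forall>x \<in> carrier G. star x \<in> carrier G) \<and>
     (\<forall>x \<in> carrier G. \<forall>y \<in> carrier G. star (x \<otimes>\<^bsub>G\<^esub> y) = star y \<otimes>\<^bsub>G\<^esub> star x) \<and>
     (\<forall>x \<in> carrier G. star (star x) = x)"

definition unit_hom :: "('g, 'b) monoid_scheme \<Rightarrow> ('g \<Rightarrow> 'r::comm_ring_1) \<Rightarrow> bool" where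
  "unit_hom G \<sigma> \<longleftrightarrow>
     (\<forall>x \<in> carrier G. \<sigma> x dvd 1) \<and>
     (\<forall>x \<in> carrier G. \<forall>y \<in> carrier G. \<sigma> (x \<otimes>\<^bsub>G\<^esub> y) = \<sigma> x * \<sigma> y)"

definition sym_elts :: "('g, 'b) monoid_scheme \<Rightarrow> ('g \<Rightarrow> 'g) \<Rightarrow> 'g set" where
  "sym_elts G star = {x \<in> carrier G. star x = x}"

definition kern :: "('g, 'b) monoid_scheme \<Rightarrow> ('g \<Rightarrow> 'r::one) \<Rightarrow> 'g set" where
  "kern G \<sigma> = {x \<in> carrier G. \<sigma> x = 1}"

definition S_gens :: "('g, 'b) monoid_scheme \<Rightarrow> ('g \<Rightarrow> 'g) \<Rightarrow> ('g \<Rightarrow> 'r::comm_ring_1) \<Rightarrow> ('g \<Rightarrow> 'r) set" where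
  "S_gens G star \<sigma> =
     {(\<lambda>g. 2 * gr_basis x g) | x. x \<in> sym_elts G star \<inter> kern G \<sigma>}
   \<union> {(\<lambda>g. \<alpha> * gr_basis x g) | x \<alpha>. x \<in> sym_elts G star - kern G \<sigma> \<and> \<alpha> * (1 - \<sigma> x) = 0}
   \<union> {(\<lambda>g. gr_basis x g + \<sigma> x * gr_basis (star x) g) | x. x \<in> carrier G - sym_elts G star}"

inductive_set gr_span :: "('g \<Rightarrow> 'r::comm_ring_1) set \<Rightarrow> ('g \<Rightarrow> 'r) set" for A where
  zero: "(\<lambda>g. 0) \<in> gr_span A"
| gen: "a \<in> A \<Longrightarrow> a \<in> gr_span A"
| add: "a \<in> gr_span A \<Longrightarrow> b \<in> gr_span A \<Longrightarrow> (\<lambda>g. a g + b g) \<in> gr_span A"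
| smult: "a \<in> gr_span A \<Longrightarrow> (\<lambda>g. r * a g) \<in> gr_span A"

definition S_set :: "('g, 'b) monoid_scheme \<Rightarrow> ('g \<Rightarrow> 'g) \<Rightarrow> ('g \<Rightarrow> 'r::comm_ring_1) \<Rightarrow> ('g \<Rightarrow> 'r) set" where
  "S_set G star \<sigma> = gr_span (S_gens G star \<sigma>)"

definition anticommutative :: "('g, 'b) monoid_scheme \<Rightarrow> ('g \<Rightarrow> 'r::comm_ring_1) set \<Rightarrow> bool" where
  "anticommutative G S \<longleftrightarrow>
     (\<forall>a \<in> S. \<forall>b \<in> S. (\<lambda>g. gr_mult G a b g + gr_mult G b a g) = (\<lambda>g. 0))"

end

theory Submission
  imports Defs
begin

lemma gr_mult_fin:
  assumes "finite U" "finite V" "\<And>h. a h \<noteq> 0 \<Longrightarrow> h \<in> U" "\<And>k. b k \<noteq> 0 \<Longrightarrow> k \<in> V"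
  shows "gr_mult G a b g = (\<Sum>h\<in>U. \<Sum>k\<in>V. if h \<otimes>\<^bsub>G\<^esub> k = g then a h * b k else 0)"
proof -
  let ?P = "{(h, k). h \<in> gr_supp a \<and> k \<in> gr_supp b \<and> h \<otimes>\<^bsub>G\<^esub> k = g}"
  have sub: "?P \<subseteq> U \<times> V" using assms(3,4) by (auto simp: gr_supp_def)
  have "gr_mult G a b g = (\<Sum>p\<in>?P. a (fst p) * b (snd p))" by (simp add: gr_mult_def)
  also have "\<dots> = (\<Sum>p\<in>U\<times>V. if fst p \<otimes>\<^bsub>G\<^esub> snd p = g then a (fst p) * b (snd p) else 0)"
    by (rule sum.mono_neutral_cong_left) (use assms sub in \<open>auto simp: gr_supp_def\<close>)
  also have "\<dots> = (\<Sum>h\<in>U. \<Sum>k\<in>V. if h \<otimes>\<^bsub>G\<^esub> k = g then a h * b k else 0)"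
    by (simp add: sum.cartesian_product split_def)
  finally show ?thesis .
qed

lemma pair_prod:
  fixes c d :: "'r::comm_ring_1"
  assumes "x \<noteq> x'" "y \<noteq> y'"
  shows "gr_mult G (\<lambda>g. gr_basis x g + c * gr_basis x' g) (\<lambda>g. gr_basis y g + d * gr_basis y' g) g
   = (if x \<otimes>\<^bsub>G\<^esub> y = g then 1 else 0) + (if x \<otimes>\<^bsub>G\<^esub> y' = g then d else 0)
     + (if x' \<otimes>\<^bsub>G\<^esub> y = g then c else 0) + (if x' \<otimes>\<^bsub>G\<^esub> y' = g then c*d else 0)"
proof -
  have "gr_mult G (\<lambda>g. gr_basis x g + c * gr_basis x' g) (\<lambda>g. gr_basis y g + d * gr_basis y' g) g
    = (\<Sum>h\<in>{x,x'}. \<Sum>k\<in>{y,y'}. if h \<otimes>\<^bsub>G\<^esub> k = g then (gr_basis x h + c * gr_basis x' h) * (gr_basis y k + d * gr_basis y' k) else 0)"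
    by (rule gr_mult_fin) (auto simp: gr_basis_def split: if_splits)
  also have "\<dots> = (if x \<otimes>\<^bsub>G\<^esub> y = g then 1 else 0) + (if x \<otimes>\<^bsub>G\<^esub> y' = g then d else 0)
     + (if x' \<otimes>\<^bsub>G\<^esub> y = g then c else 0) + (if x' \<otimes>\<^bsub>G\<^esub> y' = g then c*d else 0)"
    using assms by (simp add: gr_basis_def add.assoc)
  finally show ?thesis .
qed

lemma single_l:
  fixes \<alpha> d :: "'r::comm_ring_1"
  assumes "y \<noteq> y'"
  shows "gr_mult G (\<lambda>g. \<alpha> * gr_basis z g) (\<lambda>g. gr_basis y g + d * gr_basis y' g) g
   = (if z \<otimes>\<^bsub>G\<^esub> y = g then \<alpha> else 0) + (if z \<otimes>\<^bsub>G\<^esub> y' = g then \<alpha>*d else 0)"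
proof -
  have "gr_mult G (\<lambda>g. \<alpha> * gr_basis z g) (\<lambda>g. gr_basis y g + d * gr_basis y' g) g
    = (\<Sum>h\<in>{z}. \<Sum>k\<in>{y,y'}. if h \<otimes>\<^bsub>G\<^esub> k = g then (\<alpha> * gr_basis z h) * (gr_basis y k + d * gr_basis y' k) else 0)"
    by (rule gr_mult_fin) (auto simp: gr_basis_def split: if_splits)
  also have "\<dots> = (if z \<otimes>\<^bsub>G\<^esub> y = g then \<alpha> else 0) + (if z \<otimes>\<^bsub>G\<^esub> y' = g then \<alpha>*d else 0)"
    using assms by (simp add: gr_basis_def)
  finally show ?thesis .
qed

lemma single_r:
  fixes \<alpha> d :: "'r::comm_ring_1"
  assumes "y \<noteq> y'"
  shows "gr_mult G (\<lambda>g. gr_basis y g + d * gr_basis y' g) (\<lambda>g. \<alpha> * gr_basis z g) g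
   = (if y \<otimes>\<^bsub>G\<^esub> z = g then \<alpha> else 0) + (if y' \<otimes>\<^bsub>G\<^esub> z = g then d*\<alpha> else 0)"
proof -
  have "gr_mult G (\<lambda>g. gr_basis y g + d * gr_basis y' g) (\<lambda>g. \<alpha> * gr_basis z g) g
    = (\<Sum>h\<in>{y,y'}. \<Sum>k\<in>{z}. if h \<otimes>\<^bsub>G\<^esub> k = g then (gr_basis y h + d * gr_basis y' h) * (\<alpha> * gr_basis z k) else 0)"
    by (rule gr_mult_fin) (auto simp: gr_basis_def split: if_splits)
  also have "\<dots> = (if y \<otimes>\<^bsub>G\<^esub> z = g then \<alpha> else 0) + (if y' \<otimes>\<^bsub>G\<^esub> z = g then d*\<alpha> else 0)"
    using assms by (simp add: gr_basis_def)
  finally show ?thesis .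
qed

lemma S3_in:
  assumes "x \<in> carrier G - sym_elts G star"
  shows "(\<lambda>g. gr_basis x g + \<sigma> x * gr_basis (star x) g) \<in> S_set G star \<sigma>"
  unfolding S_set_def by (rule gr_span.gen) (use assms in \<open>auto simp: S_gens_def\<close>)

lemma S2_in:
  fixes \<sigma> :: "'g \<Rightarrow> 'r::comm_ring_1"
  assumes "z \<in> carrier G" "star z = z" "2 * (1 - \<sigma> z) = 0"
  shows "(\<lambda>g. 2 * gr_basis z g) \<in> S_set G star \<sigma>"
  unfolding S_set_def
proof (rule gr_span.gen)
  show "(\<lambda>g. 2 * gr_basis z g) \<in> S_gens G star \<sigma>"
  proof (cases "\<sigma> z = 1")
    case True
    then show ?thesis using assms unfolding S_gens_def sym_elts_def kern_def by blast
  next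
    case False
    then have "z \<in> sym_elts G star - kern G \<sigma>" using assms by (auto simp: sym_elts_def kern_def)
    then show ?thesis using assms(3) unfolding S_gens_def by blast
  qed
qed

lemma ac_pt:
  assumes "anticommutative G S" "a \<in> S" "b \<in> S"
  shows "gr_mult G a b g + gr_mult G b a g = 0"
  using assms unfolding anticommutative_def by metis

lemma core:
  fixes A B C D E F H K :: 'g and s t :: "'r::comm_ring_1"
  assumes FF: "\<And>g. (if A=g then 1 else 0) + (if B=g then t else 0) + (if C=g then s else 0)
     + (if D=g then s*t else 0) + (if E=g then 1 else 0) + (if F=g then s else 0)
     + (if H=g then t else 0) + (if K=g then t*s else 0) = 0"
  and eAE: "A=E \<longleftrightarrow> D=K" and eAD: "A=D \<longleftrightarrow> E=K" and eAF: "A=F \<longleftrightarrow> B=K"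
  and eAH: "A=H \<longleftrightarrow> C=K" and eBC: "B=C \<longleftrightarrow> F=H" and eBE: "B=E \<longleftrightarrow> D=F"
  and eBH: "B=H \<longleftrightarrow> C=F" and eCE: "C=E \<longleftrightarrow> D=H"
  and ne: "A\<noteq>B" "A\<noteq>C" "B\<noteq>D" "C\<noteq>D" "E\<noteq>F" "E\<noteq>H" "F\<noteq>K" "H\<noteq>K"
  and two: "(2::'r) \<noteq> 0" and four: "(4::'r) = 0"
  and su: "s dvd 1" and tu: "t dvd 1" and tm: "t \<noteq> -1"
  and ZA: "A = K \<Longrightarrow> s*t = -1 \<Longrightarrow> A = E \<or> A = F"
  and ZB: "B = F \<Longrightarrow> s = -t \<Longrightarrow> B = H \<or> B = K"
  and ZD: "D = E \<Longrightarrow> s*t = -1 \<Longrightarrow> A = E \<or> B = E"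
  and G1: "B=C \<Longrightarrow> B=F \<Longrightarrow> B=H \<Longrightarrow> A=D \<Longrightarrow> A=E"
  shows "(A=E \<and> E=D \<and> D=K \<and> 2*(1+s*t) = 0 \<and> 2*(s+t) = 0)
       \<or> (A=F \<and> F=H \<and> H=D \<and> 1+s+t+s*t = 0)
       \<or> (A=D \<and> D\<noteq>F \<and> F=H \<and> s*t = -1 \<and> s = -t)
       \<or> (A=F \<and> F\<noteq>D \<and> D=H \<and> s = -1)"
proof -
  have uz: "u \<noteq> 0" if "u dvd 1" for u :: 'r using that by auto
  have u2: "2*u \<noteq> 0" if "u dvd 1" for u :: 'r
  proof
    assume "2*u = 0"
    from that obtain k where "1 = u*k" by (auto elim: dvdE)
    then have "2 = 2*u*k" by (simp add: mult.assoc)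
    with \<open>2*u=0\<close> two show False by simp
  qed
  have stu: "s*t dvd 1" using mult_dvd_mono[OF su tu] by simp
  have s0: "s \<noteq> 0" and t0: "t \<noteq> 0" and st0: "s*t \<noteq> 0" using su tu stu uz by auto
  have s2: "2*s \<noteq> 0" and t2: "2*t \<noteq> 0" using u2 su tu by auto
  have ts: "t*s = s*t" by (simp add: mult.commute)
  show ?thesis
  proof (cases "A = E")
    case True
    then have DK: "D = K" using eAE by simp
    have DA: "D = A"
    proof (rule ccontr)
      assume "D \<noteq> A"
      then have "B\<noteq>A" "C\<noteq>A" "F\<noteq>A" "H\<noteq>A" "K\<noteq>A" "E = A" using ne True DK by auto
      with FF[of A] \<open>D\<noteq>A\<close> have "(1::'r)+1 = 0" by simp
      with two show False by simp
    qed
    have r1: "2*(1+s*t) = 0"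
    proof -
      have "B\<noteq>A" "C\<noteq>A" "F\<noteq>A" "H\<noteq>A" "K=A" "E = A" using ne True DK DA by auto
      with FF[of A] DA have "1 + s*t + 1 + t*s = 0" by simp
      then show ?thesis by (simp add: algebra_simps ts)
    qed
    have bb: "B\<noteq>A" "B \<noteq> D" "B\<noteq>E" "B\<noteq>K" using ne True DK DA by auto
    have bb': "A\<noteq>B" "D \<noteq> B" "E\<noteq>B" "K\<noteq>B" using bb by auto
    have r2: "2*(s+t) = 0"
    proof (cases "H = B")
      case BH: True
      then have CF: "C = F" using eBH by auto
      show ?thesis
      proof (cases "C = B")
        case True
        then have "F = B" using CF by simp
        with True BH bb' FF[of B] have "t + s + s + t = 0" by simp
        then show ?thesis by (simp add: algebra_simps)
      next
        case False
        then have "F \<noteq> B" using CF by simp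
        with False BH bb' FF[of B] have "t + t = 0" by simp
        then have "2*t = 0" by (metis mult_2)
        with t2 show ?thesis by contradiction
      qed
    next
      case BH: False
      then have CF: "C \<noteq> F" using eBH by auto
      show ?thesis
      proof (cases "C = B")
        case True
        then have "F \<noteq> B" using CF by simp
        with True BH bb' FF[of B] have "t + s = 0" by simp
        then show ?thesis by (simp add: algebra_simps)
      next
        case CB: False
        show ?thesis
        proof (cases "F = B")
          case True
          with CB BH bb' FF[of B] have "t + s = 0" by simp
          then show ?thesis by (simp add: algebra_simps)
        next
          case False
          with CB BH bb' FF[of B] have "t = 0" by simp
          with t0 show ?thesis by simp
        qed
      qed
    qed
    show ?thesis using True DK DA r1 r2 by auto
  next
    case nAE: False
    then have nDK: "D \<noteq> K" using eAE by simp
    show ?thesis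
    proof (cases "A = K")
      case AK: True
      have "F\<noteq>A" "H\<noteq>A" "D\<noteq>A" "B\<noteq>A" "C\<noteq>A" "E\<noteq>A" using ne AK nAE eAD by auto
      with FF[of A] AK have "1 + t*s = 0" by simp
      then have "s*t = -1" by (simp add: ts eq_neg_iff_add_eq_0 add.commute)
      from ZA[OF AK this] nAE \<open>F\<noteq>A\<close> show ?thesis by auto
    next
      case nAK: False
      have bA: "B\<noteq>A" "C\<noteq>A" "E\<noteq>A" "K\<noteq>A" using ne nAE nAK by auto
      show ?thesis
      proof (cases "D = A")
        case DA: True
        then have EK: "E = K" using eAD by auto
        show ?thesis
        proof (cases "F = A")
          case FA: True
          show ?thesis
          proof (cases "H = A")
            case HA: True
            with FA DA bA FF[of A] have "1 + s*t + s + t = 0" by simp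
            then have "1+s+t+s*t = 0" by (simp add: algebra_simps)
            then show ?thesis using FA HA DA by auto
          next
            case HA: False
            with FA DA bA FF[of A] have e1: "1 + s*t + s = 0" by simp
            have BK: "B = K" using eAF FA by auto
            have eE: "A\<noteq>E" "B=E" "C\<noteq>E" "D\<noteq>E" "F\<noteq>E" "H\<noteq>E" "K=E"
              using BK EK nAE DA eCE HA ne by auto
            from FF[of E] eE have e2: "t + 1 + t*s = 0" by simp
            have eC: "A\<noteq>C" "B\<noteq>C" "D\<noteq>C" "E\<noteq>C" "F\<noteq>C" "K\<noteq>C"
              using eE ne FA bA by auto
            have st: "s = t" using e1 e2 by (simp add: algebra_simps ts) (metis add_left_cancel add.commute)
            show ?thesis
            proof (cases "H = C")
              case True
              with eC FF[of C] have "s + t = 0" by simp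
              then have "2*s = 0" using st by (metis mult_2)
              with s2 show ?thesis by contradiction
            next
              case False
              with eC FF[of C] have "s = 0" by simp
              with s0 show ?thesis by simp
            qed
          qed
        next
          case FA: False
          show ?thesis
          proof (cases "H = A")
            case HA: True
            with FA DA bA FF[of A] have e1: "1 + s*t + t = 0" by simp
            have CK: "C = K" using eAH HA by auto
            have eE: "A\<noteq>E" "B\<noteq>E" "C=E" "D\<noteq>E" "F\<noteq>E" "H\<noteq>E" "K=E"
              using CK EK nAE DA eBE FA HA ne by auto
            from FF[of E] eE have e2: "s + 1 + t*s = 0" by simp
            have eB: "A\<noteq>B" "C\<noteq>B" "D\<noteq>B" "E\<noteq>B" "H\<noteq>B" "K\<noteq>B"
              using eE ne HA bA by auto
            have st: "s = t" using e1 e2 by (simp add: algebra_simps ts) (metis add_left_cancel add.commute)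
            show ?thesis
            proof (cases "F = B")
              case True
              with eB FF[of B] have "t + s = 0" by simp
              then have "2*s = 0" using st by (metis mult_2)
              with s2 show ?thesis by contradiction
            next
              case False
              with eB FF[of B] have "t = 0" by simp
              with t0 show ?thesis by simp
            qed
          next
            case HA: False
            with FA DA bA FF[of A] have e1: "1 + s*t = 0" by simp
            then have stm: "s*t = -1" by (simp add: eq_neg_iff_add_eq_0 add.commute)
            have eB: "A\<noteq>B" "D\<noteq>B" "E\<noteq>B" "K\<noteq>B"
              using ne eBE eAF FA DA EK by auto
            show ?thesis
            proof (cases "H = B")
              case HB: True
              then have CF: "C = F" using eBH by auto
              show ?thesis
              proof (cases "C = B")
                case True
                then have "B = C" "B = F" "B = H" "A = D" using CF HB DA by auto
                from G1[OF this] nAE show ?thesis by simp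
              next
                case False
                then have "F \<noteq> B" using CF by simp
                with False HB eB FF[of B] have "t + t = 0" by simp
                then have "2*t = 0" by (metis mult_2)
        with t2 show ?thesis by contradiction
              qed
            next
              case HB: False
              then have CF: "C \<noteq> F" using eBH by auto
              show ?thesis
              proof (cases "C = B")
                case True
                then have "F \<noteq> B" using CF by simp
                with True HB eB FF[of B] have "t + s = 0" by simp
                then have "s = -t" by (simp add: eq_neg_iff_add_eq_0 add.commute)
                moreover have "F = H" using True eBC by auto
                ultimately show ?thesis using DA FA stm by auto
              next
                case CB: False
                show ?thesis
                proof (cases "F = B")
                  case True
                  with CB HB eB FF[of B] have "t + s = 0" by simp
                  then have "s = -t" by (simp add: eq_neg_iff_add_eq_0 add.commute)
                  from ZB[OF _ this] True HB eAF FA have False by auto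
                  then show ?thesis ..
                next
                  case False
                  with CB HB eB FF[of B] have "t = 0" by simp
                  with t0 show ?thesis by simp
                qed
              qed
            qed
          qed
        qed
      next
        case DA: False
        then have EK: "E \<noteq> K" using eAD by auto
        show ?thesis
        proof (cases "F = A")
          case FA: True
          have BK: "B = K" using eAF FA by auto
          show ?thesis
          proof (cases "H = A")
            case HA: True
            with FA DA bA FF[of A] have e1: "1 + s + t = 0" by simp
            have CK: "C = K" using eAH HA by auto
            have eK: "A\<noteq>K" "B=K" "C=K" "D\<noteq>K" "E\<noteq>K" "F\<noteq>K" "H\<noteq>K"
              using BK CK nDK EK ne bA by auto
            from FF[of K] eK have e2: "t + s + t*s = 0" by simp
            have eD: "A\<noteq>D" "B\<noteq>D" "C\<noteq>D" "F\<noteq>D" "H\<noteq>D" "K\<noteq>D"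
              using ne DA FA HA nDK by auto
            have st1: "s*t = 1" using e1 e2 by (simp add: algebra_simps ts) (metis add_left_cancel add.commute add.assoc)
            show ?thesis
            proof (cases "E = D")
              case True
              with eD FF[of D] have "s*t + 1 = 0" by simp
              with st1 two show ?thesis by simp
            next
              case False
              with eD FF[of D] have "s*t = 0" by simp
              with st0 show ?thesis by simp
            qed
          next
            case HA: False
            with FA DA bA FF[of A] have e1: "1 + s = 0" by simp
            then have sm: "s = -1" by (simp add: eq_neg_iff_add_eq_0 add.commute)
            have eD: "A\<noteq>D" "B\<noteq>D" "C\<noteq>D" "F\<noteq>D" "K\<noteq>D"
              using ne DA FA BK nDK by auto
            show ?thesis
            proof (cases "H = D")
              case True
              then show ?thesis using FA DA sm by auto
            next
              case HD: False
              show ?thesis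
              proof (cases "E = D")
                case True
                with HD eD FF[of D] have "s*t + 1 = 0" by simp
                then have "s*t = -1" by (simp add: eq_neg_iff_add_eq_0 add.commute)
                from ZD[OF _ this] True nAE BK EK have False by auto
                then show ?thesis ..
              next
                case False
                with HD eD FF[of D] have "s*t = 0" by simp
                with st0 show ?thesis by simp
              qed
            qed
          qed
        next
          case FA: False
          show ?thesis
          proof (cases "H = A")
            case HA: True
            with FA DA bA FF[of A] have e1: "1 + t = 0" by simp
            then have "t = -1" by (simp add: eq_neg_iff_add_eq_0 add.commute)
            with tm show ?thesis by simp
          next
            case HA: False
            with FA DA bA FF[of A] have "(1::'r) = 0" by simp
            then show ?thesis by simp
          qed
        qed
      qed
    qed
  qed
qed

lemma u2z:
  fixes u :: "'r::comm_ring_1"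
  assumes "u dvd 1" "2 * u = 0" shows "(2::'r) = 0"
proof -
  obtain k where "1 = u * k" using assms(1) by (auto elim: dvdE)
  then have "(2::'r) = 2 * u * k" by (simp add: mult.assoc)
  with assms(2) show ?thesis by simp
qed

lemma (in group) lc: "a \<in> carrier G \<Longrightarrow> p \<in> carrier G \<Longrightarrow> q \<in> carrier G \<Longrightarrow> (a \<otimes> p = a \<otimes> q) = (p = q)"
  by (simp add: Units_eq)

lemma (in group) lemZ:
  fixes \<sigma> :: "'a \<Rightarrow> 'r::comm_ring_1"
  assumes ac: "anticommutative G (S_set G star \<sigma>)" and uh: "unit_hom G \<sigma>" and two: "(2::'r) \<noteq> 0"
    and z: "z \<in> carrier G" "star z = z" "2 * (1 - \<sigma> z) = 0"
    and w: "w \<in> carrier G - sym_elts G star" and sw: "star w \<in> carrier G"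
  shows "z \<otimes> w = w \<otimes> z \<or> z \<otimes> star w = w \<otimes> z"
proof (rule ccontr)
  assume nn: "\<not> ?thesis"
  have wc: "w \<in> carrier G" and wn: "w \<noteq> star w" using w by (auto simp: sym_elts_def)
  have u: "\<sigma> w dvd 1" using uh wc by (simp add: unit_hom_def)
  have P: "\<And>g. gr_mult G (\<lambda>g. 2 * gr_basis z g) (\<lambda>g. gr_basis w g + \<sigma> w * gr_basis (star w) g) g
     + gr_mult G (\<lambda>g. gr_basis w g + \<sigma> w * gr_basis (star w) g) (\<lambda>g. 2 * gr_basis z g) g = 0"
    by (rule ac_pt[OF ac S2_in[of z G star \<sigma>, OF z] S3_in[of w G star \<sigma>, OF w]])
  have Q: "\<And>g. (if z \<otimes> w = g then 2 else 0) + (if z \<otimes> star w = g then 2 * \<sigma> w else 0)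
     + ((if w \<otimes> z = g then 2 else 0) + (if star w \<otimes> z = g then \<sigma> w * 2 else 0)) = (0::'r)"
    using P by (simp only: single_l[OF wn] single_r[OF wn])
  have d1: "z \<otimes> star w \<noteq> z \<otimes> w" "z \<otimes> w \<noteq> z \<otimes> star w" using lc[OF z(1) wc sw] wn by auto
  have n1: "w \<otimes> z \<noteq> z \<otimes> w" "w \<otimes> z \<noteq> z \<otimes> star w" using nn by auto
  show False
  proof (cases "star w \<otimes> z = z \<otimes> star w")
    case True
    then have "star w \<otimes> z \<noteq> z \<otimes> w" using d1 by simp
    with Q[of "z \<otimes> w"] d1 n1 have "(2::'r) = 0" by simp
    with two show False by simp
  next
    case False
    with Q[of "z \<otimes> star w"] d1 n1 have "2 * \<sigma> w = 0" by simp
    obtain k where "1 = \<sigma> w * k" using u by (auto elim: dvdE)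
    then have "(2::'r) = 2 * \<sigma> w * k" by (simp add: mult.assoc)
    with \<open>2 * \<sigma> w = 0\<close> have "(2::'r) = 0" by simp
    with two show False by simp
  qed
qed

lemma (in group) main_aux:
  fixes star :: "'a \<Rightarrow> 'a"
    and \<sigma> :: "'a \<Rightarrow> 'r::comm_ring_1" and x y :: 'a
  assumes "CHAR('r) \<noteq> 2"
    and "group_involution G star"
    and "unit_hom G \<sigma>"
    and "\<exists>z \<in> carrier G. \<sigma> z \<noteq> 1"
    and "\<forall>z \<in> carrier G. \<sigma> (z \<otimes> star z) = 1"
    and "anticommutative G (S_set G star \<sigma>)"
    and "x \<in> carrier G - sym_elts G star" and "y \<in> carrier G - sym_elts G star"
    and "\<sigma> y \<noteq> -1"
  shows "(x \<otimes> y = y \<otimes> x \<and> y \<otimes> x = star x \<otimes> star y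
          \<and> star x \<otimes> star y = star y \<otimes> star x
          \<and> 2 * (1 + \<sigma> (x \<otimes> y)) = 0 \<and> 2 * (\<sigma> x + \<sigma> y) = 0)
       \<or> (x \<otimes> y = y \<otimes> star x \<and> y \<otimes> star x = star y \<otimes> x
          \<and> star y \<otimes> x = star x \<otimes> star y
          \<and> 1 + \<sigma> x + \<sigma> y + \<sigma> (x \<otimes> y) = 0)
       \<or> (x \<otimes> y = star x \<otimes> star y \<and> star x \<otimes> star y \<noteq> y \<otimes> star x
          \<and> y \<otimes> star x = star y \<otimes> x
          \<and> \<sigma> (x \<otimes> y) = -1 \<and> \<sigma> x = - \<sigma> y)
       \<or> (x \<otimes> y = y \<otimes> star x \<and> y \<otimes> star x \<noteq> star x \<otimes> star y
          \<and> star x \<otimes> star y = star y \<otimes> x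
          \<and> \<sigma> x = -1)"
proof -
  note uh = assms(3) and ac = assms(6)
  have stc: "\<And>a. a \<in> carrier G \<Longrightarrow> star a \<in> carrier G"
    and stm: "\<And>a b. a \<in> carrier G \<Longrightarrow> b \<in> carrier G \<Longrightarrow> star (a \<otimes> b) = star b \<otimes> star a"
    and sts: "\<And>a. a \<in> carrier G \<Longrightarrow> star (star a) = a"
    using assms(2) by (auto simp: group_involution_def)
  have sgu: "\<And>a. a \<in> carrier G \<Longrightarrow> \<sigma> a dvd 1"
    and sgm: "\<And>a b. a \<in> carrier G \<Longrightarrow> b \<in> carrier G \<Longrightarrow> \<sigma> (a \<otimes> b) = \<sigma> a * \<sigma> b"
    using uh by (auto simp: unit_hom_def)
  have xc: "x \<in> carrier G" and yc: "y \<in> carrier G" and xn: "star x \<noteq> x" and yn: "star y \<noteq> y"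
    using assms(7,8) by (auto simp: sym_elts_def)
  have xsc: "star x \<in> carrier G" and ysc: "star y \<in> carrier G" using stc xc yc by auto
  have xn': "x \<noteq> star x" and yn': "y \<noteq> star y" using xn yn by auto
  have sq: "\<And>p q. p \<in> carrier G \<Longrightarrow> q \<in> carrier G \<Longrightarrow> (star p = star q) = (p = q)"
    by (metis sts)
  have two: "(2::'r) \<noteq> 0"
  proof
    assume "(2::'r) = 0"
    then have "of_nat 2 = (0::'r)" by simp
    then have dv: "CHAR('r) dvd 2" by (simp only: of_nat_eq_0_iff_char_dvd)
    then have "CHAR('r) \<noteq> 0" by (metis dvd_0_left_iff zero_neq_numeral)
    moreover have "CHAR('r) \<le> 2" using dv by (simp add: dvd_imp_le)
    moreover have "CHAR('r) \<noteq> Suc 0" by simp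
    ultimately have "CHAR('r) = 2" by linarith
    with assms(1) show False by simp
  qed
  have st1: "star \<one> = \<one>"
  proof -
    have "star \<one> = star (\<one> \<otimes> \<one>)" by simp
    also have "\<dots> = star \<one> \<otimes> star \<one>" using stm[of "\<one>" "\<one>"] by simp
    finally show ?thesis using stc[of \<one>] by simp
  qed
  have sg1: "\<sigma> \<one> = 1" using assms(5) st1 by force
  have four: "(4::'r) = 0"
  proof -
    have "\<And>g. gr_mult G (\<lambda>g. 2 * gr_basis \<one> g) (\<lambda>g. gr_basis x g + \<sigma> x * gr_basis (star x) g) g
     + gr_mult G (\<lambda>g. gr_basis x g + \<sigma> x * gr_basis (star x) g) (\<lambda>g. 2 * gr_basis \<one> g) g = 0"
      by (rule ac_pt[OF ac S2_in[of \<one> G star \<sigma>] S3_in[of x G star \<sigma>]]) (use st1 sg1 assms(7) in auto)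
    from this[of x] have "(2::'r) + 2 = 0"
      by (simp only: single_l[OF xn'] single_r[OF xn']) (simp add: xc xsc xn)
    then show ?thesis by simp
  qed
  have xx: "x \<otimes> star x = star x \<otimes> x"
  proof (rule ccontr)
    assume nx: "x \<otimes> star x \<noteq> star x \<otimes> x"
    have "\<And>g. gr_mult G (\<lambda>g. gr_basis x g + \<sigma> x * gr_basis (star x) g) (\<lambda>g. gr_basis x g + \<sigma> x * gr_basis (star x) g) g
     + gr_mult G (\<lambda>g. gr_basis x g + \<sigma> x * gr_basis (star x) g) (\<lambda>g. gr_basis x g + \<sigma> x * gr_basis (star x) g) g = 0"
      by (rule ac_pt[OF ac S3_in[of x G star \<sigma>] S3_in[of x G star \<sigma>]]) (use assms(7) in auto)
    from this[of "x \<otimes> star x"] have e: "\<sigma> x + \<sigma> x = 0"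
      using nx lc[OF xc xc xsc] right_cancel[OF xsc xsc xc] xn
      by (simp only: pair_prod[OF xn' xn']) (simp add: eq_commute[of "star x"])
    then have "2 * \<sigma> x = 0" by (metis mult_2)
    with u2z[OF sgu[OF xc]] two show False by blast
  qed
  note cl = xc yc xsc ysc
  have FF: "\<And>g. (if x \<otimes> y = g then 1 else 0) + (if x \<otimes> star y = g then \<sigma> y else 0)
     + (if star x \<otimes> y = g then \<sigma> x else 0) + (if star x \<otimes> star y = g then \<sigma> x * \<sigma> y else 0)
     + (if y \<otimes> x = g then 1 else 0) + (if y \<otimes> star x = g then \<sigma> x else 0)
     + (if star y \<otimes> x = g then \<sigma> y else 0) + (if star y \<otimes> star x = g then \<sigma> y * \<sigma> x else 0) = 0"
  proof -
    fix g
    have "gr_mult G (\<lambda>g. gr_basis x g + \<sigma> x * gr_basis (star x) g) (\<lambda>g. gr_basis y g + \<sigma> y * gr_basis (star y) g) g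
      + gr_mult G (\<lambda>g. gr_basis y g + \<sigma> y * gr_basis (star y) g) (\<lambda>g. gr_basis x g + \<sigma> x * gr_basis (star x) g) g = 0"
      by (rule ac_pt[OF ac S3_in[of x G star \<sigma>] S3_in[of y G star \<sigma>]]) (use assms(7,8) in auto)
    then show "(if x \<otimes> y = g then 1 else 0) + (if x \<otimes> star y = g then \<sigma> y else 0)
     + (if star x \<otimes> y = g then \<sigma> x else 0) + (if star x \<otimes> star y = g then \<sigma> x * \<sigma> y else 0)
     + (if y \<otimes> x = g then 1 else 0) + (if y \<otimes> star x = g then \<sigma> x else 0)
     + (if star y \<otimes> x = g then \<sigma> y else 0) + (if star y \<otimes> star x = g then \<sigma> y * \<sigma> x else 0) = 0"
      by (simp only: pair_prod[OF xn' yn'] pair_prod[OF yn' xn']) (simp only: add.assoc)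
  qed
  have sA: "star (x \<otimes> y) = star y \<otimes> star x" using stm cl by simp
  have sB: "star (x \<otimes> star y) = y \<otimes> star x" using stm sts cl by simp
  have sC: "star (star x \<otimes> y) = star y \<otimes> x" using stm sts cl by simp
  have sD: "star (star x \<otimes> star y) = y \<otimes> x" using stm sts cl by simp
  have sE: "star (y \<otimes> x) = star x \<otimes> star y" using stm cl by simp
  have sF: "star (y \<otimes> star x) = x \<otimes> star y" using stm sts cl by simp
  have sH: "star (star y \<otimes> x) = star x \<otimes> y" using stm sts cl by simp
  have sK: "star (star y \<otimes> star x) = x \<otimes> y" using stm sts cl by simp
  have eAE: "x \<otimes> y = y \<otimes> x \<longleftrightarrow> star x \<otimes> star y = star y \<otimes> star x"
    using sq[of "x \<otimes> y" "y \<otimes> x"] sA sE cl by auto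
  have eAD: "x \<otimes> y = star x \<otimes> star y \<longleftrightarrow> y \<otimes> x = star y \<otimes> star x"
    using sq[of "x \<otimes> y" "star x \<otimes> star y"] sA sD cl by auto
  have eAF: "x \<otimes> y = y \<otimes> star x \<longleftrightarrow> x \<otimes> star y = star y \<otimes> star x"
    using sq[of "x \<otimes> y" "y \<otimes> star x"] sA sF cl by auto
  have eAH: "x \<otimes> y = star y \<otimes> x \<longleftrightarrow> star x \<otimes> y = star y \<otimes> star x"
    using sq[of "x \<otimes> y" "star y \<otimes> x"] sA sH cl by auto
  have eBC: "x \<otimes> star y = star x \<otimes> y \<longleftrightarrow> y \<otimes> star x = star y \<otimes> x"
    using sq[of "x \<otimes> star y" "star x \<otimes> y"] sB sC cl by auto
  have eBE: "x \<otimes> star y = y \<otimes> x \<longleftrightarrow> star x \<otimes> star y = y \<otimes> star x"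
    using sq[of "x \<otimes> star y" "y \<otimes> x"] sB sE cl by auto
  have eBH: "x \<otimes> star y = star y \<otimes> x \<longleftrightarrow> star x \<otimes> y = y \<otimes> star x"
    using sq[of "x \<otimes> star y" "star y \<otimes> x"] sB sH cl by auto
  have eCE: "star x \<otimes> y = y \<otimes> x \<longleftrightarrow> star x \<otimes> star y = star y \<otimes> x"
    using sq[of "star x \<otimes> y" "y \<otimes> x"] sC sE cl by auto
  have ne: "x \<otimes> y \<noteq> x \<otimes> star y" "x \<otimes> y \<noteq> star x \<otimes> y" "x \<otimes> star y \<noteq> star x \<otimes> star y"
    "star x \<otimes> y \<noteq> star x \<otimes> star y" "y \<otimes> x \<noteq> y \<otimes> star x" "y \<otimes> x \<noteq> star y \<otimes> x"
    "y \<otimes> star x \<noteq> star y \<otimes> star x" "star y \<otimes> x \<noteq> star y \<otimes> star x"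
    using lc right_cancel cl xn' yn' by auto
  have su: "\<sigma> x dvd 1" and tu: "\<sigma> y dvd 1" using sgu cl by auto
  have sxy: "\<sigma> (x \<otimes> y) = \<sigma> x * \<sigma> y" using sgm cl by simp
  have syy: "\<sigma> y * \<sigma> (star y) = 1" using assms(5) sgm cl by force
  have ZA: "x \<otimes> y = y \<otimes> x \<or> x \<otimes> y = y \<otimes> star x"
    if h: "x \<otimes> y = star y \<otimes> star x" "\<sigma> x * \<sigma> y = -1"
  proof -
    have zc: "x \<otimes> y \<in> carrier G" using cl by simp
    have zs: "star (x \<otimes> y) = x \<otimes> y" using sA h by simp
    have z2: "2 * (1 - \<sigma> (x \<otimes> y)) = 0" using sxy h four by simp
    from lemZ[OF ac uh two zc zs z2 assms(7) xsc] show ?thesis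
      using cl by (auto simp: m_assoc lc)
  qed
  have ZB: "x \<otimes> star y = star y \<otimes> x \<or> x \<otimes> star y = star y \<otimes> star x"
    if h: "x \<otimes> star y = y \<otimes> star x" "\<sigma> x = - \<sigma> y"
  proof -
    have zc: "x \<otimes> star y \<in> carrier G" using cl by simp
    have zs: "star (x \<otimes> star y) = x \<otimes> star y" using sB h by simp
    have "\<sigma> (x \<otimes> star y) = - (\<sigma> y * \<sigma> (star y))" using sgm[OF xc ysc] h(2) by simp
    then have z2: "2 * (1 - \<sigma> (x \<otimes> star y)) = 0" using syy four by simp
    from lemZ[OF ac uh two zc zs z2 assms(7) xsc] show ?thesis
      using cl by (auto simp: m_assoc lc)
  qed
  have ZD: "x \<otimes> y = y \<otimes> x \<or> x \<otimes> star y = y \<otimes> x"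
    if h: "star x \<otimes> star y = y \<otimes> x" "\<sigma> x * \<sigma> y = -1"
  proof -
    have zc: "y \<otimes> x \<in> carrier G" using cl by simp
    have zs: "star (y \<otimes> x) = y \<otimes> x" using sE h by simp
    have z2: "2 * (1 - \<sigma> (y \<otimes> x)) = 0" using sgm cl h four by (simp add: mult.commute)
    from lemZ[OF ac uh two zc zs z2 assms(8) ysc] show ?thesis
      using cl by (auto simp: m_assoc lc)
  qed
  have G1: "x \<otimes> y = y \<otimes> x"
    if h: "x \<otimes> star y = star x \<otimes> y" "x \<otimes> star y = y \<otimes> star x" "x \<otimes> star y = star y \<otimes> x"
      "x \<otimes> y = star x \<otimes> star y"
  proof -
    have "x \<otimes> (x \<otimes> y) = x \<otimes> (star x \<otimes> star y)" using h(4) by simp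
    also have "\<dots> = (x \<otimes> star x) \<otimes> star y" using cl by (simp add: m_assoc)
    also have "\<dots> = (star x \<otimes> x) \<otimes> star y" using xx by simp
    also have "\<dots> = star x \<otimes> (x \<otimes> star y)" using cl by (simp add: m_assoc)
    also have "\<dots> = star x \<otimes> (star y \<otimes> x)" using h(3) by simp
    also have "\<dots> = (star x \<otimes> star y) \<otimes> x" using cl by (simp add: m_assoc)
    also have "\<dots> = (x \<otimes> y) \<otimes> x" using h(4) by simp
    also have "\<dots> = x \<otimes> (y \<otimes> x)" using cl by (simp add: m_assoc)
    finally show ?thesis using lc cl by simp
  qed
  note C = core[where A="x \<otimes> y" and B="x \<otimes> star y" and C="star x \<otimes> y" and D="star x \<otimes> star y"
      and E="y \<otimes> x" and F="y \<otimes> star x" and H="star y \<otimes> x" and K="star y \<otimes> star x"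
      and s="\<sigma> x" and t="\<sigma> y", OF FF eAE eAD eAF eAH eBC eBE eBH eCE
      ne two four su tu assms(9) ZA ZB ZD G1]
  show ?thesis using C unfolding sxy by blast
qed


theorem lemma3p6:
  fixes G :: "('g, 'b) monoid_scheme" and star :: "'g \<Rightarrow> 'g"
    and \<sigma> :: "'g \<Rightarrow> 'r::comm_ring_1" and x y :: 'g
  assumes "group G"
    and "CHAR('r) \<noteq> 2"
    and "group_involution G star"
    and "unit_hom G \<sigma>"
    and "\<exists>z \<in> carrier G. \<sigma> z \<noteq> 1"
    and "\<forall>z \<in> carrier G. \<sigma> (z \<otimes>\<^bsub>G\<^esub> star z) = 1"
    and "anticommutative G (S_set G star \<sigma>)"
    and "x \<in> carrier G - sym_elts G star" and "y \<in> carrier G - sym_elts G star"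
    and "\<sigma> y \<noteq> -1"
  shows "(x \<otimes>\<^bsub>G\<^esub> y = y \<otimes>\<^bsub>G\<^esub> x \<and> y \<otimes>\<^bsub>G\<^esub> x = star x \<otimes>\<^bsub>G\<^esub> star y
          \<and> star x \<otimes>\<^bsub>G\<^esub> star y = star y \<otimes>\<^bsub>G\<^esub> star x
          \<and> 2 * (1 + \<sigma> (x \<otimes>\<^bsub>G\<^esub> y)) = 0 \<and> 2 * (\<sigma> x + \<sigma> y) = 0)
       \<or> (x \<otimes>\<^bsub>G\<^esub> y = y \<otimes>\<^bsub>G\<^esub> star x \<and> y \<otimes>\<^bsub>G\<^esub> star x = star y \<otimes>\<^bsub>G\<^esub> x
          \<and> star y \<otimes>\<^bsub>G\<^esub> x = star x \<otimes>\<^bsub>G\<^esub> star y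
          \<and> 1 + \<sigma> x + \<sigma> y + \<sigma> (x \<otimes>\<^bsub>G\<^esub> y) = 0)
       \<or> (x \<otimes>\<^bsub>G\<^esub> y = star x \<otimes>\<^bsub>G\<^esub> star y \<and> star x \<otimes>\<^bsub>G\<^esub> star y \<noteq> y \<otimes>\<^bsub>G\<^esub> star x
          \<and> y \<otimes>\<^bsub>G\<^esub> star x = star y \<otimes>\<^bsub>G\<^esub> x
          \<and> \<sigma> (x \<otimes>\<^bsub>G\<^esub> y) = -1 \<and> \<sigma> x = - \<sigma> y)
       \<or> (x \<otimes>\<^bsub>G\<^esub> y = y \<otimes>\<^bsub>G\<^esub> star x \<and> y \<otimes>\<^bsub>G\<^esub> star x \<noteq> star x \<otimes>\<^bsub>G\<^esub> star y
          \<and> star x \<otimes>\<^bsub>G\<^esub> star y = star y \<otimes>\<^bsub>G\<^esub> x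
          \<and> \<sigma> x = -1)"
  using assms by (rule group.main_aux)

end
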